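(* Let an instance with $n$ agents $[n]=\{1,\dots,n\}$, $m$ indivisible items $[m]$ and binary additive valuations be given (notation as in the context). Then every stable allocation is optimal under $\mathsf{LexiMin}$, i.e. it minimizes $\mathsf{LexiMin}(\mathbf{p}(\chi))=\sum_{i=1}^n m^{\,m-h_i}$ over all clean max-USW allocations $\chi$. Consequently, the profiles of any two stable allocations are equal up to a permutation of the coordinates.
   Context: Each agent $i\in[n]$ has a set $L_i\subseteq[m]$ of liked items, and valuation $v_i(S)=|S\cap L_i|$ for $S\subseteq[m]$. An allocation $\chi=(\chi_1,\dots,\chi_n)$ is a tuple of pairwise disjoint subsets of $[m]$ (not necessarily covering $[m]$). It is clean if $\chi_i\subseteq L_i$ for all $i$, and max-USW if it maximizes $\sum_i v_i(\chi_i)$ among all allocations. Throughout, "allocation" means a clean max-USW allocation. The profile of $\chi$ is $\mathbf{p}(\chi)=(h_1,\dots,h_n)$ with $h_i=|\chi_i|$. Given $\chi$, form a directed graph on $[n]$ with an arc $(i,i')$, $i\neq i'$, whenever some item $o\in\chi_i$ satisfies $o\in L_{i'}$. $\chi$ admits a transfer $u\to v$ if there is a simple directed path from $u$ to $v$ with at least one arc in this graph (reallocating the items along the path makes $u$ lose one item and $v$ gain one). A transfer $u\to v$ is narrowing if $h_u\ge h_v+2$. $\chi$ is stable if it admits no narrowing transfer. $\mathsf{LexiMin}(h_1,\dots,h_n)=\sum_i m^{m-h_i}$; an allocation is optimal under a criterion $f$ if it minimizes $f(\mathbf{p}(\chi))$ over all clean max-USW allocations. *)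

theory Defs
  imports Main
begin

text \<open>Agents are 1..n, items are 1..m. L i is the set of items liked by agent i.
An allocation is a function chi from agents to item bundles; only agents in 1..n matter.\<close>

definition is_alloc :: "nat \<Rightarrow> nat \<Rightarrow> (nat \<Rightarrow> nat set) \<Rightarrow> bool" where
  "is_alloc n m chi \<longleftrightarrow>
     (\<forall>i\<in>{1..n}. chi i \<subseteq> {1..m}) \<and>
     (\<forall>i\<in>{1..n}. \<forall>j\<in>{1..n}. i \<noteq> j \<longrightarrow> chi i \<inter> chi j = {})"

definition usw :: "nat \<Rightarrow> (nat \<Rightarrow> nat set) \<Rightarrow> (nat \<Rightarrow> nat set) \<Rightarrow> nat" where
  "usw n L chi = (\<Sum>i\<in>{1..n}. card (chi i \<inter> L i))"

definition is_clean :: "nat \<Rightarrow> (nat \<Rightarrow> nat set) \<Rightarrow> (nat \<Rightarrow> nat set) \<Rightarrow> bool" where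
  "is_clean n L chi \<longleftrightarrow> (\<forall>i\<in>{1..n}. chi i \<subseteq> L i)"

definition is_max_usw :: "nat \<Rightarrow> nat \<Rightarrow> (nat \<Rightarrow> nat set) \<Rightarrow> (nat \<Rightarrow> nat set) \<Rightarrow> bool" where
  "is_max_usw n m L chi \<longleftrightarrow> is_alloc n m chi \<and>
     (\<forall>chi'. is_alloc n m chi' \<longrightarrow> usw n L chi' \<le> usw n L chi)"

text \<open>"Allocation" in the paper: a clean max-USW allocation.\<close>
definition valid_alloc :: "nat \<Rightarrow> nat \<Rightarrow> (nat \<Rightarrow> nat set) \<Rightarrow> (nat \<Rightarrow> nat set) \<Rightarrow> bool" where
  "valid_alloc n m L chi \<longleftrightarrow> is_clean n L chi \<and> is_max_usw n m L chi"

definition arc :: "nat \<Rightarrow> (nat \<Rightarrow> nat set) \<Rightarrow> (nat \<Rightarrow> nat set) \<Rightarrow> nat \<Rightarrow> nat \<Rightarrow> bool" where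
  "arc n L chi i i' \<longleftrightarrow> i \<in> {1..n} \<and> i' \<in> {1..n} \<and> i \<noteq> i' \<and> (\<exists>it\<in>chi i. it \<in> L i')"

definition admits_transfer :: "nat \<Rightarrow> (nat \<Rightarrow> nat set) \<Rightarrow> (nat \<Rightarrow> nat set) \<Rightarrow> nat \<Rightarrow> nat \<Rightarrow> bool" where
  "admits_transfer n L chi u v \<longleftrightarrow>
     (\<exists>ps. length ps \<ge> 2 \<and> distinct ps \<and> hd ps = u \<and> last ps = v \<and>
        (\<forall>k. Suc k < length ps \<longrightarrow> arc n L chi (ps ! k) (ps ! Suc k)))"

definition is_stable :: "nat \<Rightarrow> (nat \<Rightarrow> nat set) \<Rightarrow> (nat \<Rightarrow> nat set) \<Rightarrow> bool" where
  "is_stable n L chi \<longleftrightarrow>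
     \<not> (\<exists>u\<in>{1..n}. \<exists>v\<in>{1..n}. admits_transfer n L chi u v \<and> card (chi u) \<ge> card (chi v) + 2)"

definition LexiMin :: "nat \<Rightarrow> nat \<Rightarrow> (nat \<Rightarrow> nat) \<Rightarrow> nat" where
  "LexiMin n m h = (\<Sum>i\<in>{1..n}. m ^ (m - h i))"

definition profile :: "(nat \<Rightarrow> nat set) \<Rightarrow> nat \<Rightarrow> nat" where
  "profile chi i = card (chi i)"

definition optimal_LexiMin :: "nat \<Rightarrow> nat \<Rightarrow> (nat \<Rightarrow> nat set) \<Rightarrow> (nat \<Rightarrow> nat set) \<Rightarrow> bool" where
  "optimal_LexiMin n m L chi \<longleftrightarrow> valid_alloc n m L chi \<and>
     (\<forall>chi'. valid_alloc n m L chi' \<longrightarrow> LexiMin n m (profile chi) \<le> LexiMin n m (profile chi'))"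

end

theory Submission
  imports Defs "HOL-Library.Transitive_Closure_Table"
begin

lemma convex_up:
  fixes p :: "nat \<Rightarrow> int"
  assumes mono: "\<And>a b. a \<le> b \<Longrightarrow> p (Suc a) - p a \<le> p (Suc b) - p b"
  shows "p (x + d) \<ge> p x + int d * (p (Suc x) - p x)"
proof (induction d)
  case 0 then show ?case by simp
next
  case (Suc d)
  have "p (x + Suc d) = p (x + d) + (p (Suc (x+d)) - p (x+d))" by simp
  moreover have "p (Suc x) - p x \<le> p (Suc (x+d)) - p (x+d)" using mono[of x "x+d"] by simp
  ultimately show ?case using Suc by (simp add: algebra_simps)
qed

lemma convex_down:
  fixes p :: "nat \<Rightarrow> int"
  assumes mono: "\<And>a b. a \<le> b \<Longrightarrow> p (Suc a) - p a \<le> p (Suc b) - p b"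
  shows "p (y + d) - p y \<le> int d * (p (y + d) - p (y + d - 1))"
proof (induction d)
  case 0 then show ?case by simp
next
  case (Suc d)
  have "p (y + Suc d) - p y = (p (y + d) - p y) + (p (Suc (y+d)) - p (y+d))" by simp
  moreover have "d = 0 \<or> p (y + d) - p (y + d - 1) \<le> p (Suc (y+d)) - p (y+d)"
    using mono[of "y+d-1" "y+d"] by (cases "y + d") auto
  moreover have "int d * (p (y + d) - p (y + d - 1)) \<le> int d * (p (Suc (y+d)) - p (y+d))"
    using \<open>d = 0 \<or> _\<close> by (auto intro: mult_left_mono)
  ultimately show ?case using Suc by (simp add: algebra_simps)
qed

lemma subgrad:
  fixes p :: "nat \<Rightarrow> int"
  assumes mono: "\<And>a b. a \<le> b \<Longrightarrow> p (Suc a) - p a \<le> p (Suc b) - p b"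
    and lo: "x \<ge> 1 \<Longrightarrow> p x - p (x - 1) \<le> c" and hi: "c \<le> p (Suc x) - p x"
  shows "p y \<ge> p x + c * (int y - int x)"
proof (cases "y \<ge> x")
  case True
  then obtain d where y: "y = x + d" using le_Suc_ex by blast
  have "p y \<ge> p x + int d * (p (Suc x) - p x)" using convex_up[of p, OF mono] y by blast
  moreover have "int d * c \<le> int d * (p (Suc x) - p x)" using hi by (simp add: mult_left_mono)
  ultimately show ?thesis using y by (simp add: algebra_simps)
next
  case False
  define d where "d = x - y"
  have x: "x = y + d" and d: "d \<ge> 1" using False unfolding d_def by auto
  have "p x - p y \<le> int d * (p x - p (x - 1))" using convex_down[of p, OF mono, of y d] x by simp
  moreover have "int d * (p x - p (x - 1)) \<le> int d * c" using lo x d by (simp add: mult_left_mono)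
  ultimately show ?thesis using x by (simp add: algebra_simps)
qed

lemma reach_transfer:
  assumes "(arc n L chi)\<^sup>*\<^sup>* k i" "k \<noteq> i"
  shows "admits_transfer n L chi k i \<and> k \<in> {1..n}"
proof -
  obtain xs where "rtrancl_path (arc n L chi) k xs i" using assms(1) rtranclp_eq_rtrancl_path by metis
  then obtain ys where p: "rtrancl_path (arc n L chi) k ys i" and dist: "distinct (k # ys)"
    using rtrancl_path_distinct by metis
  have ne: "ys \<noteq> []" using p assms(2) by (cases rule: rtrancl_path.cases) auto
  have arcs: "\<forall>j. Suc j < length (k # ys) \<longrightarrow> arc n L chi ((k # ys) ! j) ((k # ys) ! Suc j)"
    using rtrancl_path_nth[OF p] by auto
  have "last (k # ys) = i" using rtrancl_path_last[OF p ne] ne by simp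
  hence "admits_transfer n L chi k i" unfolding admits_transfer_def
    using dist ne arcs by (intro exI[of _ "k # ys"]) (auto simp: Suc_le_eq)
  moreover have "k \<in> {1..n}" using arcs[rule_format, of 0] ne by (auto simp: arc_def)
  ultimately show ?thesis by blast
qed

lemma usw_clean:
  assumes "is_clean n L chi"
  shows "usw n L chi = (\<Sum>i\<in>{1..n}. card (chi i))"
  using assms unfolding usw_def is_clean_def by (auto intro!: sum.cong simp: Int_absorb2)

lemma card_U:
  assumes "is_alloc n m chi"
  shows "card (\<Union>i\<in>{1..n}. chi i) = (\<Sum>i\<in>{1..n}. card (chi i))"
  using assms unfolding is_alloc_def
  by (intro card_UN_disjoint) (auto intro: finite_subset)

lemma sum_bump:
  fixes f :: "nat \<Rightarrow> nat"
  assumes "finite A" "j \<in> A"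
  shows "sum (f(j := f j + 1)) A = sum f A + 1"
proof -
  have "sum (f(j := f j + 1)) A = (f j + 1) + sum (f(j := f j + 1)) (A - {j})"
    using assms by (simp add: sum.remove)
  also have "sum (f(j := f j + 1)) (A - {j}) = sum f (A - {j})" by (rule sum.cong) auto
  also have "(f j + 1) + sum f (A - {j}) = sum f A + 1" using assms by (simp add: sum.remove)
  finally show ?thesis .
qed

lemma U_eq:
  assumes v: "valid_alloc n m L chi" and v': "valid_alloc n m L chi'"
  shows "(\<Union>i\<in>{1..n}. chi' i) = (\<Union>i\<in>{1..n}. chi i)"
proof -
  have a: "is_alloc n m chi" and c: "is_clean n L chi" and mx: "\<forall>c'. is_alloc n m c' \<longrightarrow> usw n L c' \<le> usw n L chi"
    using v unfolding valid_alloc_def is_max_usw_def by auto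
  have a': "is_alloc n m chi'" and c': "is_clean n L chi'" and mx': "\<forall>c'. is_alloc n m c' \<longrightarrow> usw n L c' \<le> usw n L chi'"
    using v' unfolding valid_alloc_def is_max_usw_def by auto
  have sub: "(\<Union>i\<in>{1..n}. chi' i) \<subseteq> (\<Union>i\<in>{1..n}. chi i)"
  proof
    fix it assume "it \<in> (\<Union>i\<in>{1..n}. chi' i)"
    then obtain j where j: "j \<in> {1..n}" "it \<in> chi' j" by blast
    show "it \<in> (\<Union>i\<in>{1..n}. chi i)"
    proof (rule ccontr)
      assume no: "it \<notin> (\<Union>i\<in>{1..n}. chi i)"
      define c2 where "c2 = chi(j := insert it (chi j))"
      have om: "it \<in> {1..m}" using a' j unfolding is_alloc_def by blast
      have oL: "it \<in> L j" using c' j unfolding is_clean_def by blast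
      have a2: "is_alloc n m c2" using a om no j unfolding is_alloc_def c2_def by auto
      have "usw n L c2 = (\<Sum>i\<in>{1..n}. card (c2 i \<inter> L i))" by (simp add: usw_def)
      also have "(\<lambda>i. card (c2 i \<inter> L i)) = (\<lambda>i. card (chi i \<inter> L i))(j := card (chi j \<inter> L j) + 1)"
      proof
        fix i show "card (c2 i \<inter> L i) = ((\<lambda>i. card (chi i \<inter> L i))(j := card (chi j \<inter> L j) + 1)) i"
        proof (cases "i = j")
          case True
          have fin: "finite (chi j \<inter> L j)" using a j unfolding is_alloc_def by (meson finite_Int finite_atLeastAtMost finite_subset)
          have "it \<notin> chi j" using no j by blast
          then show ?thesis using True oL fin by (simp add: c2_def)
        qed (simp add: c2_def)
      qed
      also have "(\<Sum>i\<in>{1..n}. ((\<lambda>i. card (chi i \<inter> L i))(j := card (chi j \<inter> L j) + 1)) i) = usw n L chi + 1"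
        using sum_bump[of "{1..n}" j "\<lambda>i. card (chi i \<inter> L i)"] j by (simp add: usw_def)
      finally show False using mx a2 by fastforce
    qed
  qed
  have "usw n L chi = usw n L chi'" using mx mx' a a' by (simp add: le_antisym)
  hence "card (\<Union>i\<in>{1..n}. chi' i) = card (\<Union>i\<in>{1..n}. chi i)"
    using card_U[OF a] card_U[OF a'] usw_clean[OF c] usw_clean[OF c'] by simp
  moreover have "finite (\<Union>i\<in>{1..n}. chi i)" using a unfolding is_alloc_def by (auto intro: finite_subset)
  ultimately show ?thesis using sub by (simp add: card_subset_eq)
qed

lemma own_unique:
  assumes a: "is_alloc n m chi" and i: "i \<in> {1..n}" and x: "x \<in> chi i"
  shows "(THE i. i \<in> {1..n} \<and> x \<in> chi i) = i"
proof (rule the_equality)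
  show "i \<in> {1..n} \<and> x \<in> chi i" using i x by blast
  fix j assume j: "j \<in> {1..n} \<and> x \<in> chi j"
  have d: "\<forall>i\<in>{1..n}. \<forall>j\<in>{1..n}. i \<noteq> j \<longrightarrow> chi i \<inter> chi j = {}" using a unfolding is_alloc_def by (rule conjunct2)
  show "j = i"
  proof (rule ccontr)
    assume "j \<noteq> i"
    then have "chi i \<inter> chi j = {}" using d i j by blast
    then show False using x j by blast
  qed
qed

lemma key:
  fixes p :: "nat \<Rightarrow> int"
  assumes mono: "\<And>a b. a \<le> b \<Longrightarrow> p (Suc a) - p a \<le> p (Suc b) - p b"
    and v: "valid_alloc n m L chi" and st: "is_stable n L chi" and v': "valid_alloc n m L chi'"
  shows "(\<Sum>i\<in>{1..n}. p (card (chi i))) \<le> (\<Sum>i\<in>{1..n}. p (card (chi' i)))"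
proof -
  have a: "is_alloc n m chi" and c: "is_clean n L chi"
    using v unfolding valid_alloc_def is_max_usw_def by auto
  have a': "is_alloc n m chi'" and c': "is_clean n L chi'"
    using v' unfolding valid_alloc_def is_max_usw_def by auto
  define h where "h i = card (chi i)" for i
  define h' where "h' i = card (chi' i)" for i
  define R where "R i = {k. (arc n L chi)\<^sup>*\<^sup>* k i}" for i
  define r where "r i = Max (h ` R i)" for i
  define D where "D k = p (Suc k) - p k" for k
  define G where "G x = (if x = 0 then D 0 else D (x - 1))" for x
  define g where "g i = G (r i)" for i
  have Dmono: "x \<le> y \<Longrightarrow> D x \<le> D y" for x y using mono unfolding D_def by blast
  have Gmono: "x \<le> y \<Longrightarrow> G x \<le> G y" for x y unfolding G_def using Dmono by auto
  have finR: "finite (R i)" for i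
  proof -
    have "R i \<subseteq> insert i {1..n}" unfolding R_def using reach_transfer by fastforce
    thus ?thesis by (rule finite_subset) simp
  qed
  have iR: "i \<in> R i" for i unfolding R_def by simp
  have hr: "h i \<le> r i" for i unfolding r_def using finR iR by simp
  have rh: "r i \<le> h i + 1" if i: "i \<in> {1..n}" for i
  proof -
    have "h k \<le> h i + 1" if "k \<in> R i" for k
    proof (cases "k = i")
      case False
      then have "admits_transfer n L chi k i \<and> k \<in> {1..n}" using reach_transfer that unfolding R_def by blast
      then show ?thesis using st i unfolding is_stable_def h_def by fastforce
    qed simp
    then show ?thesis unfolding r_def using finR iR by (subst Max_le_iff) auto
  qed
  have rmono: "r i \<le> r j" if "arc n L chi i j" for i j
  proof -
    have "R i \<subseteq> R j" unfolding R_def using that by (auto intro: rtranclp.rtrancl_into_rtrancl)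
    then show ?thesis unfolding r_def using finR iR by (intro Max_mono) auto
  qed
  have sg: "p y \<ge> p (h i) + g i * (int y - int (h i))" if i: "i \<in> {1..n}" for i y
  proof (rule subgrad[of p, OF mono])
    have cases: "r i = h i \<or> r i = h i + 1" using hr[of i] rh[OF i] by linarith
    show "p (h i) - p (h i - 1) \<le> g i" if "h i \<ge> 1"
    proof -
      have e: "p (h i) - p (h i - 1) = D (h i - 1)" unfolding D_def using that by (simp add: Suc_diff_le)
      show ?thesis using cases e Dmono[of "h i - 1" "h i"] that unfolding g_def G_def by auto
    qed
    show "g i \<le> p (Suc (h i)) - p (h i)"
      using cases Dmono[of "h i - 1" "h i"] unfolding g_def G_def D_def[symmetric] by auto
  qed
  define own where "own x = (THE i. i \<in> {1..n} \<and> x \<in> chi i)" for x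
  have own: "own x = i" if "i \<in> {1..n}" "x \<in> chi i" for i x
    unfolding own_def by (rule own_unique[OF a that])
  have finchi: "finite (chi i)" "finite (chi' i)" if "i \<in> {1..n}" for i
    using a a' that unfolding is_alloc_def by (meson finite_atLeastAtMost finite_subset)+
  have disj: "\<forall>i\<in>{1..n}. \<forall>j\<in>{1..n}. i \<noteq> j \<longrightarrow> chi i \<inter> chi j = {}"
    "\<forall>i\<in>{1..n}. \<forall>j\<in>{1..n}. i \<noteq> j \<longrightarrow> chi' i \<inter> chi' j = {}"
    using a a' unfolding is_alloc_def by auto
  have UU: "(\<Union>i\<in>{1..n}. chi' i) = (\<Union>i\<in>{1..n}. chi i)" by (rule U_eq[OF v v'])
  have S1: "(\<Sum>i\<in>{1..n}. g i * int (h i)) = (\<Sum>x\<in>(\<Union>i\<in>{1..n}. chi i). g (own x))"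
  proof -
    have "(\<Sum>x\<in>(\<Union>i\<in>{1..n}. chi i). g (own x)) = (\<Sum>i\<in>{1..n}. \<Sum>x\<in>chi i. g (own x))"
      using finchi disj by (intro sum.UNION_disjoint) auto
    also have "\<dots> = (\<Sum>i\<in>{1..n}. \<Sum>x\<in>chi i. g i)" using own by (intro sum.cong) auto
    finally show ?thesis unfolding h_def by (simp add: mult.commute)
  qed
  have S2: "(\<Sum>i\<in>{1..n}. g i * int (h' i)) \<ge> (\<Sum>x\<in>(\<Union>i\<in>{1..n}. chi' i). g (own x))"
  proof -
    have "(\<Sum>x\<in>(\<Union>i\<in>{1..n}. chi' i). g (own x)) = (\<Sum>i\<in>{1..n}. \<Sum>x\<in>chi' i. g (own x))"
      using finchi disj by (intro sum.UNION_disjoint) auto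
    also have "\<dots> \<le> (\<Sum>i\<in>{1..n}. \<Sum>x\<in>chi' i. g i)"
    proof (intro sum_mono)
      fix i x assume i: "i \<in> {1..n}" and x: "x \<in> chi' i"
      then obtain j where j: "j \<in> {1..n}" "x \<in> chi j" using UU by blast
      have oj: "own x = j" using own j by blast
      show "g (own x) \<le> g i"
      proof (cases "j = i")
        case False
        have "x \<in> L i" using c' i x unfolding is_clean_def by blast
        then have "arc n L chi j i" using False i j unfolding arc_def by blast
        then show ?thesis using oj rmono Gmono unfolding g_def by blast
      qed (simp add: oj)
    qed
    finally show ?thesis unfolding h'_def by (simp add: mult.commute)
  qed
  have "(\<Sum>i\<in>{1..n}. p (h i) + g i * (int (h' i) - int (h i))) \<le> (\<Sum>i\<in>{1..n}. p (h' i))"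
    using sg by (intro sum_mono) auto
  moreover have "(\<Sum>i\<in>{1..n}. p (h i) + g i * (int (h' i) - int (h i))) =
     (\<Sum>i\<in>{1..n}. p (h i)) + ((\<Sum>i\<in>{1..n}. g i * int (h' i)) - (\<Sum>i\<in>{1..n}. g i * int (h i)))"
    by (simp add: sum.distrib sum_subtractf algebra_simps)
  moreover have "(\<Sum>i\<in>{1..n}. g i * int (h' i)) \<ge> (\<Sum>i\<in>{1..n}. g i * int (h i))"
  proof -
    have "(\<Sum>i\<in>{1..n}. g i * int (h' i)) \<ge> (\<Sum>x\<in>(\<Union>i\<in>{1..n}. chi i). g (own x))"
      using S2 by (simp only: UU)
    then show ?thesis using S1 by linarith
  qed
  ultimately have "(\<Sum>i\<in>{1..n}. p (h i)) \<le> (\<Sum>i\<in>{1..n}. p (h' i))"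
    by (metis (no_types, lifting) add_le_cancel_left diff_ge_0_iff_ge order.trans le_add_same_cancel1)
  then show ?thesis unfolding h_def h'_def .
qed

lemma lift_mono:
  fixes p :: "nat \<Rightarrow> int"
  assumes "\<And>k. p (Suc k) - p k \<le> p (Suc (Suc k)) - p (Suc k)"
  shows "\<And>a b. a \<le> b \<Longrightarrow> p (Suc a) - p a \<le> p (Suc b) - p b"
proof -
  fix a b :: nat assume "a \<le> b"
  then show "p (Suc a) - p a \<le> p (Suc b) - p b"
    using lift_Suc_mono_le[of "\<lambda>k. p (Suc k) - p k"] assms by blast
qed

lemma lexi_convex:
  fixes m :: nat
  shows "int (m ^ (m - Suc k)) - int (m ^ (m - k)) \<le> int (m ^ (m - Suc (Suc k))) - int (m ^ (m - Suc k))"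
proof (cases "Suc (Suc k) \<le> m")
  case True
  define a where "a = m - Suc (Suc k)"
  have e: "m - Suc k = Suc a" "m - k = Suc (Suc a)" using True unfolding a_def by auto
  have "0 \<le> int m ^ a * (int m - 1)^2" by simp
  then show ?thesis unfolding e a_def[symmetric] by (simp add: power2_eq_square algebra_simps)
next
  case False
  then have "Suc k = m \<or> k \<ge> m" by linarith
  then show ?thesis
  proof
    assume "Suc k = m"
    then have "m - Suc k = 0" "m - k = 1" "m - Suc (Suc k) = 0" "m \<ge> 1" by auto
    then show ?thesis by simp
  qed simp
qed

lemma thr_convex:
  fixes t :: nat
  shows "int (Suc k + 1 - t) - int (k + 1 - t) \<le> int (Suc (Suc k) + 1 - t) - int (Suc k + 1 - t)"
  by simp

lemma both_equal:
  fixes p :: "nat \<Rightarrow> int"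
  assumes "\<And>k. p (Suc k) - p k \<le> p (Suc (Suc k)) - p (Suc k)"
    and "valid_alloc n m L c1" "is_stable n L c1" "valid_alloc n m L c2" "is_stable n L c2"
  shows "(\<Sum>i\<in>{1..n}. p (card (c1 i))) = (\<Sum>i\<in>{1..n}. p (card (c2 i)))"
  using key[of p, OF lift_mono[of p, OF assms(1)] assms(2,3,4)]
    key[of p, OF lift_mono[of p, OF assms(1)] assms(4,5,2)] by linarith

lemma count_ge:
  fixes h :: "nat \<Rightarrow> nat"
  assumes "finite A"
  shows "int (card {i\<in>A. t \<le> h i}) = (\<Sum>i\<in>A. int (h i + 1 - t)) - (\<Sum>i\<in>A. int (h i + 1 - Suc t))"
proof -
  have "int (card {i\<in>A. t \<le> h i}) = (\<Sum>i\<in>{i\<in>A. t \<le> h i}. (1::int))" by simp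
  also have "\<dots> = (\<Sum>i\<in>A. if t \<le> h i then 1 else 0)" using assms by (rule sum.inter_filter)
  also have "\<dots> = (\<Sum>i\<in>A. int (h i + 1 - t) - int (h i + 1 - Suc t))" by (intro sum.cong) auto
  finally show ?thesis by (simp add: sum_subtractf)
qed

lemma card_eq_levels:
  fixes f g :: "nat \<Rightarrow> nat"
  assumes fin: "finite A" and ge: "\<And>t. card {i\<in>A. t \<le> f i} = card {i\<in>A. t \<le> g i}"
  shows "card {i\<in>A. f i = t} = card {i\<in>A. g i = t}"
proof -
  have split: "card {i\<in>A. t \<le> h i} = card {i\<in>A. h i = t} + card {i\<in>A. Suc t \<le> h i}" for h :: "nat \<Rightarrow> nat"
  proof -
    have "{i\<in>A. t \<le> h i} = {i\<in>A. h i = t} \<union> {i\<in>A. Suc t \<le> h i}" by auto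
    moreover have "{i\<in>A. h i = t} \<inter> {i\<in>A. Suc t \<le> h i} = {}" by auto
    ultimately show ?thesis using fin by (simp add: card_Un_disjoint)
  qed
  show ?thesis using split[of f] split[of g] ge[of t] ge[of "Suc t"] by linarith
qed

lemma perm_from_levels:
  fixes f g :: "nat \<Rightarrow> nat"
  assumes fin: "finite A" and lev: "\<And>t. card {i\<in>A. f i = t} = card {i\<in>A. g i = t}"
  shows "\<exists>\<sigma>. bij_betw \<sigma> A A \<and> (\<forall>i\<in>A. f i = g (\<sigma> i))"
proof -
  have "\<forall>t. \<exists>b. bij_betw b {i\<in>A. f i = t} {i\<in>A. g i = t}"
  proof
    fix t
    show "\<exists>b. bij_betw b {i\<in>A. f i = t} {i\<in>A. g i = t}"
      using finite_same_card_bij[of "{i\<in>A. f i = t}" "{i\<in>A. g i = t}"] fin lev[of t] by auto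
  qed
  then obtain \<beta> where b: "\<And>t. bij_betw (\<beta> t) {i\<in>A. f i = t} {i\<in>A. g i = t}" by metis
  define \<sigma> where "\<sigma> i = \<beta> (f i) i" for i
  have into: "\<sigma> i \<in> A \<and> g (\<sigma> i) = f i" if "i \<in> A" for i
    using bij_betwE[OF b[of "f i"]] that unfolding \<sigma>_def by blast
  have "inj_on \<sigma> A"
  proof (rule inj_onI)
    fix x y assume x: "x \<in> A" and y: "y \<in> A" and e: "\<sigma> x = \<sigma> y"
    then have ff: "f x = f y" using into by metis
    have "\<beta> (f x) x = \<beta> (f x) y" using e ff unfolding \<sigma>_def by simp
    moreover have "x \<in> {i\<in>A. f i = f x}" "y \<in> {i\<in>A. f i = f x}" using x y ff by auto
    ultimately show "x = y" using inj_onD[OF bij_betw_imp_inj_on[OF b[of "f x"]]] by blast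
  qed
  moreover have "\<sigma> ` A = A"
  proof
    show "\<sigma> ` A \<subseteq> A" using into by blast
    show "A \<subseteq> \<sigma> ` A"
    proof
      fix j assume j: "j \<in> A"
      then have "j \<in> \<beta> (g j) ` {i\<in>A. f i = g j}" using bij_betw_imp_surj_on[OF b[of "g j"]] by auto
      then obtain i where i: "i \<in> A" "f i = g j" "j = \<beta> (g j) i" by auto
      then have "\<sigma> i = j" unfolding \<sigma>_def by simp
      then show "j \<in> \<sigma> ` A" using i by blast
    qed
  qed
  ultimately show ?thesis using into unfolding bij_betw_def by metis
qed


theorem lemma1:
  fixes n m :: nat and L :: "nat \<Rightarrow> nat set"
  assumes "\<forall>i\<in>{1..n}. L i \<subseteq> {1..m}"
  shows "(\<forall>chi. valid_alloc n m L chi \<and> is_stable n L chi \<longrightarrow> optimal_LexiMin n m L chi) \<and>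
         (\<forall>chi1 chi2. valid_alloc n m L chi1 \<and> is_stable n L chi1 \<and>
                      valid_alloc n m L chi2 \<and> is_stable n L chi2 \<longrightarrow>
            (\<exists>\<sigma>. bij_betw \<sigma> {1..n} {1..n} \<and>
                 (\<forall>i\<in>{1..n}. profile chi1 i = profile chi2 (\<sigma> i))))"
proof (intro conjI allI impI)
  fix chi assume h: "valid_alloc n m L chi \<and> is_stable n L chi"
  show "optimal_LexiMin n m L chi" unfolding optimal_LexiMin_def
  proof (intro conjI allI impI)
    show "valid_alloc n m L chi" using h by blast
    fix chi' assume v': "valid_alloc n m L chi'"
    define p where "p k = int (m ^ (m - k))" for k
    have cv: "\<And>k. p (Suc k) - p k \<le> p (Suc (Suc k)) - p (Suc k)" unfolding p_def by (rule lexi_convex)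
    have "(\<Sum>i\<in>{1..n}. p (card (chi i))) \<le> (\<Sum>i\<in>{1..n}. p (card (chi' i)))"
      using key[of p, OF lift_mono[of p, OF cv]] h v' by blast
    then have "int (\<Sum>i\<in>{1..n}. m ^ (m - card (chi i))) \<le> int (\<Sum>i\<in>{1..n}. m ^ (m - card (chi' i)))"
      unfolding p_def by simp
    then show "LexiMin n m (profile chi) \<le> LexiMin n m (profile chi')"
      unfolding LexiMin_def profile_def by linarith
  qed
next
  fix chi1 chi2
  assume h: "valid_alloc n m L chi1 \<and> is_stable n L chi1 \<and> valid_alloc n m L chi2 \<and> is_stable n L chi2"
  have ge: "card {i\<in>{1..n}. t \<le> profile chi1 i} = card {i\<in>{1..n}. t \<le> profile chi2 i}" for t
  proof -
    have e1: "(\<Sum>i\<in>{1..n}. int (card (chi1 i) + 1 - t)) = (\<Sum>i\<in>{1..n}. int (card (chi2 i) + 1 - t))" for t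
      using both_equal[of "\<lambda>k. int (k + 1 - t)", OF thr_convex] h by blast
    have "int (card {i\<in>{1..n}. t \<le> profile chi1 i}) = int (card {i\<in>{1..n}. t \<le> profile chi2 i})"
      using count_ge[of "{1..n}" t "profile chi1"] count_ge[of "{1..n}" t "profile chi2"] e1[of t] e1[of "Suc t"]
      unfolding profile_def by simp
    then show ?thesis by simp
  qed
  have "card {i\<in>{1..n}. profile chi1 i = t} = card {i\<in>{1..n}. profile chi2 i = t}" for t
    using card_eq_levels[of "{1..n}" "profile chi1" "profile chi2" t] ge by blast
  then show "\<exists>\<sigma>. bij_betw \<sigma> {1..n} {1..n} \<and> (\<forall>i\<in>{1..n}. profile chi1 i = profile chi2 (\<sigma> i))"
    using perm_from_levels[of "{1..n}" "profile chi1" "profile chi2"] by blast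
qed

end
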